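(* Let $k>0$ and let $T$ be large. For every $1\le j\le \mathcal{J}$ and every complex number $s$, writing $K_j=\lceil e^2k\alpha_j^{-3/4}\rceil$ and $\delta_j = e^{-e^2k\alpha_j^{-3/4}}$: (i) if $0<k\le 1/2$, then $$|\mathcal{N}_j(s,k)|^{2/k}|\mathcal{N}_j(s,k-1)|^{2} \le |\mathcal{N}_j(s,k)|^2(1+\delta_j)^{2/k+2}(1-\delta_j)^{-2} + |\mathcal{Q}_j(s,k)|^{2r_k};$$ (ii) if $k>1/2$, then $$|\mathcal{N}_j(s,k-1)\mathcal{N}_j(s,k)|^{\frac{2k}{2k-1}} \le |\mathcal{N}_j(s,k)|^2(1+\delta_j)^{\frac{2k}{2k-1}}(1-\delta_j)^{-2} + |\mathcal{Q}_j(s,k)|^{2r_k}.$$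
   Context: Fix real $k>0$, a large number $M$ depending only on $k$, and a large number $T$. Set $\alpha_0=0$, $\alpha_j = 20^{j-1}/(\log\log T)^2$ for $j\ge1$, and $\mathcal{J}=1+\max\{j:\alpha_j\le 10^{-M}\}$. Let $I_j=(T^{\alpha_{j-1}},T^{\alpha_j}]$ for $1\le j\le\mathcal{J}$. For real $\ell$ and $x$ (or complex $x$) put $E_\ell(x)=\sum_{i=0}^{\lceil \ell\rceil} x^i/i!$. For $1\le j\le \mathcal{J}$, real $\alpha$ and complex $s$ define $\mathcal{P}_j(s)=\sum_{p\in I_j}p^{-s}$ ($p$ prime), $\mathcal{N}_j(s,\alpha)=E_{e^2k\alpha_j^{-3/4}}(\alpha\mathcal{P}_j(s))$, and $$\mathcal{Q}_j(s,k)=\Big(\frac{64\max(2,k+3/2)\,\mathcal{P}_j(s)}{\lceil e^2k\alpha_j^{-3/4}\rceil}\Big)^{\lceil e^2k\alpha_j^{-3/4}\rceil}.$$ Set $r_k=2+\lceil 1/k\rceil$ if $0<k\le1/2$ and $r_k=1+\lceil 2k/(2k-1)\rceil$ if $k>1/2$. *)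

theory Defs
  imports "HOL-Analysis.Analysis" "HOL-Computational_Algebra.Primes"
begin

definition alpha :: "real \<Rightarrow> nat \<Rightarrow> real" where
  "alpha T j = (if j = 0 then 0 else 20 ^ (j - 1) / (ln (ln T))^2)"

definition Jcal :: "real \<Rightarrow> real \<Rightarrow> nat" where
  "Jcal T M = 1 + Max {j::nat. alpha T j \<le> 10 powr (-M)}"

definition Iprimes :: "real \<Rightarrow> nat \<Rightarrow> nat set" where
  "Iprimes T j = {p::nat. prime p \<and> T powr alpha T (j - 1) < real p \<and> real p \<le> T powr alpha T j}"

definition Pj :: "real \<Rightarrow> nat \<Rightarrow> complex \<Rightarrow> complex" where
  "Pj T j s = (\<Sum>p\<in>Iprimes T j. (of_nat p :: complex) powr (- s))"

definition Etr :: "real \<Rightarrow> complex \<Rightarrow> complex" where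
  "Etr l x = (\<Sum>i = 0..nat \<lceil>l\<rceil>. x ^ i / of_nat (fact i))"

definition Kj :: "real \<Rightarrow> real \<Rightarrow> nat \<Rightarrow> nat" where
  "Kj k T j = nat \<lceil>exp 2 * k * alpha T j powr (- 3/4)\<rceil>"

definition Nj :: "real \<Rightarrow> real \<Rightarrow> nat \<Rightarrow> complex \<Rightarrow> real \<Rightarrow> complex" where
  "Nj k T j s a = Etr (exp 2 * k * alpha T j powr (- 3/4)) (complex_of_real a * Pj T j s)"

definition Qj :: "real \<Rightarrow> real \<Rightarrow> nat \<Rightarrow> complex \<Rightarrow> complex" where
  "Qj k T j s = (complex_of_real (64 * max 2 (k + 3/2)) * Pj T j s / of_nat (Kj k T j)) ^ Kj k T j"

definition rk :: "real \<Rightarrow> nat" where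
  "rk k = (if k \<le> 1/2 then 2 + nat \<lceil>1 / k\<rceil> else 1 + nat \<lceil>2 * k / (2 * k - 1)\<rceil>)"

definition deltaj :: "real \<Rightarrow> real \<Rightarrow> nat \<Rightarrow> real" where
  "deltaj k T j = exp (- (exp 2 * k * alpha T j powr (- 3/4)))"

end

theory Submission
  imports Defs
begin

lemma fact_mono_pow: "fact m * real m ^ n \<le> fact (n + m)"
proof (induction n)
  case 0 then show ?case by simp
next
  case (Suc n)
  have "fact m * real m ^ Suc n = (fact m * real m ^ n) * real m" by simp
  also have "\<dots> \<le> fact (n + m) * real (Suc n + m)"
    by (rule mult_mono) (use Suc in auto)
  also have "\<dots> = fact (Suc n + m)" by (simp add: algebra_simps)
  finally show ?case .
qed

lemma pow_fact_le_exp: fixes x :: real assumes "0 \<le> x" shows "x ^ n / fact n \<le> exp x"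
proof -
  have s: "summable (\<lambda>n. x^n /\<^sub>R fact n)" using exp_converges sums_summable by blast
  have "sum (\<lambda>n. x^n /\<^sub>R fact n) {n} \<le> suminf (\<lambda>n. x^n /\<^sub>R fact n)"
    by (rule sum_le_suminf[OF s]) (use assms in auto)
  then show ?thesis by (simp add: exp_def divide_inverse mult.commute)
qed

lemma tail_bound:
  fixes z :: complex and K :: nat
  assumes zK: "cmod z \<le> real K / 32"
  shows "cmod (exp z - (\<Sum>i=0..K. z^i / of_nat (fact i))) \<le> exp (- real K) * exp (- real K / 32) / 3"
proof -
  define m where "m = Suc K"
  define r where "r = cmod z"
  have r0: "0 \<le> r" by (simp add: r_def)
  have rm: "r \<le> real m / 32" using zK by (simp add: r_def m_def)
  have m0: "real m > 0" by (simp add: m_def)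
  define f where "f = (\<lambda>n. inverse(fact (n + m)) *\<^sub>R (z ^ (n + m)))"
  define C where "C = r ^ m / fact m"
  have E: "exp z = (\<Sum>n<m. inverse(fact n) *\<^sub>R (z ^ n)) + suminf f"
    unfolding f_def by (rule exp_first_terms)
  have S: "(\<Sum>i=0..K. z^i / of_nat (fact i)) = (\<Sum>n<m. inverse(fact n) *\<^sub>R (z ^ n))"
    unfolding m_def
    by (rule sum.cong) (auto simp: scaleR_conv_of_real divide_inverse mult.commute)
  have fb: "norm (f n) \<le> C * (1/32)^n" for n
  proof -
    have "norm (f n) = r ^ n * r ^ m / fact (n + m)"
      by (simp add: f_def r_def norm_mult norm_power power_add divide_inverse mult.commute)
    also have "\<dots> \<le> r ^ n * r ^ m / (fact m * real m ^ n)"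
      by (rule divide_left_mono) (use fact_mono_pow r0 m0 in auto)
    also have "\<dots> = C * (r / real m) ^ n"
      by (simp add: C_def power_divide)
    also have "\<dots> \<le> C * (1/32) ^ n"
      by (rule mult_left_mono, rule power_mono) (use rm m0 r0 in \<open>auto simp: C_def field_simps\<close>)
    finally show ?thesis .
  qed
  have sg: "summable (\<lambda>n. C * (1/32::real)^n)"
    by (intro summable_mult summable_geometric) auto
  have sf: "summable (\<lambda>n. norm (f n))"
    by (rule summable_comparison_test'[OF sg]) (use fb in auto)
  have "norm (suminf f) \<le> (\<Sum>n. norm (f n))" by (rule summable_norm[OF sf])
  also have "\<dots> \<le> (\<Sum>n. C * (1/32)^n)" by (rule suminf_le[OF fb sf sg])
  also have "\<dots> = C * (32/31)"
    using suminf_geometric[of "1/32::real"] by (simp add: suminf_mult)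
  finally have T: "norm (suminf f) \<le> C * (32/31)" .
  have "C \<le> (real m / 32) ^ m / fact m"
    unfolding C_def by (rule divide_right_mono, rule power_mono) (use rm r0 in auto)
  also have "\<dots> = (1/32)^m * (real m ^ m / fact m)" by (simp add: power_divide)
  also have "\<dots> \<le> (1/32)^m * exp (real m)"
    by (rule mult_left_mono) (use pow_fact_le_exp[of "real m" m] in auto)
  finally have C1: "C \<le> (1/32)^m * exp (real m)" .
  have num: "(1/32)^m * exp (real m) * (32/31) \<le> exp (- real K) * exp (- real K / 32) / 3"
  proof -
    have e1: "exp (1::real) \<le> 3" by (rule exp_le)
    have e2: "exp (33/32::real) \<le> 9"
    proof -
      have "exp (33/32::real) \<le> exp 2" by simp
      also have "\<dots> = exp 1 ^ 2" by (simp add: exp_of_nat_mult[symmetric])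
      also have "\<dots> \<le> 3 ^ 2" by (rule power_mono[OF e1]) simp
      finally show ?thesis by simp
    qed
    have q: "exp 1 * exp (33/32) / 32 \<le> (1::real)"
      using mult_mono[OF e1 e2] by simp
    have q0: "0 \<le> exp 1 * exp (33/32) / (32::real)" by simp
    have pw: "(exp 1 * exp (33/32) / 32) ^ K \<le> (1::real)" using power_le_one[OF q0 q] .
    have "(1/32)^m * exp (real m) * (32/31) * (3 * exp (real K) * exp (real K / 32))
        = (96/31) * (exp 1 / 32) * (exp 1 * exp (33/32) / 32) ^ K"
      by (simp add: m_def power_mult_distrib power_divide exp_of_nat_mult[symmetric] exp_add[symmetric]
            field_simps)
    also have "\<dots> \<le> (96/31) * (3 / 32) * 1"
      by (rule mult_mono, rule mult_left_mono) (use e1 pw in auto)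
    also have "\<dots> \<le> 1" by simp
    finally have "(1/32)^m * exp (real m) * (32/31) * (3 * exp (real K) * exp (real K / 32)) \<le> 1" .
    then show ?thesis by (simp add: exp_minus field_simps)
  qed
  have "cmod (exp z - (\<Sum>i=0..K. z^i / of_nat (fact i))) = norm (suminf f)"
    using E S by simp
  also have "\<dots> \<le> C * (32/31)" by (rule T)
  also have "\<dots> \<le> (1/32)^m * exp (real m) * (32/31)" using C1 by simp
  also have "\<dots> \<le> exp (- real K) * exp (- real K / 32) / 3" by (rule num)
  finally show ?thesis .
qed

lemma exp_partial_le: fixes x :: real assumes "0 \<le> x" shows "(\<Sum>i=0..K. x ^ i / fact i) \<le> exp x"
proof -
  have s: "summable (\<lambda>n. x^n /\<^sub>R fact n)" using exp_converges sums_summable by blast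
  have "sum (\<lambda>n. x^n /\<^sub>R fact n) {0..K} \<le> suminf (\<lambda>n. x^n /\<^sub>R fact n)"
    by (rule sum_le_suminf[OF s]) (use assms in auto)
  then show ?thesis by (simp add: exp_def divide_inverse mult.commute)
qed

lemma bad_bound:
  fixes u :: real and K :: nat
  assumes K1: "K \<ge> 1" and uK: "real K / 32 < u"
  shows "(\<Sum>i=0..K. u ^ i / fact i) \<le> (64 * u / real K) ^ K"
proof -
  define w where "w = 64 * u / real K"
  have Kp: "real K > 0" using K1 by simp
  have w2: "w > 2" using uK Kp by (simp add: w_def field_simps)
  have uw: "u = w * (real K / 64)" using Kp by (simp add: w_def)
  have tm: "u ^ i / fact i \<le> (w ^ K / 2 ^ K) * ((real K / 32) ^ i / fact i)" if "i \<le> K" for i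
  proof -
    have "2 ^ (K - i) \<le> w ^ (K - i)" by (rule power_mono) (use w2 in auto)
    then have "w ^ i * 2 ^ (K - i) \<le> w ^ i * w ^ (K - i)"
      by (rule mult_left_mono) (use w2 in auto)
    also have "\<dots> = w ^ K" using that by (simp add: power_add[symmetric])
    finally have a: "w ^ i * 2 ^ (K - i) \<le> w ^ K" .
    have b: "(2::real) ^ K = 2 ^ i * 2 ^ (K - i)" using that by (simp add: power_add[symmetric])
    have "u ^ i / fact i = w ^ i * (real K / 64) ^ i / fact i" unfolding uw power_mult_distrib by simp
    also have "\<dots> = (w ^ i * 2 ^ (K - i)) / 2 ^ K * ((real K / 32) ^ i / fact i)"
    proof -
      have h: "(real K / 64) ^ i = (real K / 32) ^ i / 2 ^ i"
        by (simp add: power_divide[symmetric])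
      have p: "(2::real) ^ (K - i) > 0" by simp
      show ?thesis unfolding h b using p by (simp add: divide_simps)
    qed
    also have "\<dots> \<le> w ^ K / 2 ^ K * ((real K / 32) ^ i / fact i)"
      by (intro mult_right_mono divide_right_mono a) auto
    finally show ?thesis .
  qed
  have "(\<Sum>i=0..K. u ^ i / fact i) \<le> (\<Sum>i=0..K. (w ^ K / 2 ^ K) * ((real K / 32) ^ i / fact i))"
    by (rule sum_mono) (use tm in auto)
  also have "\<dots> = (w ^ K / 2 ^ K) * (\<Sum>i=0..K. (real K / 32) ^ i / fact i)"
    by (simp add: sum_distrib_left)
  also have "\<dots> \<le> (w ^ K / 2 ^ K) * exp (real K / 32)"
    by (rule mult_left_mono[OF exp_partial_le]) (use w2 in auto)
  also have "\<dots> \<le> (w ^ K / 2 ^ K) * 2 ^ K"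
  proof -
    have "exp (1/32::real) \<le> 1 + 1/32 + (1/32)^2" by (rule exp_bound) auto
    then have e: "exp (1/32::real) \<le> 2" by (simp add: power2_eq_square)
    have "exp (real K / 32) = exp (1/32) ^ K" by (simp add: exp_of_nat_mult[symmetric])
    also have "\<dots> \<le> 2 ^ K" by (rule power_mono[OF e]) simp
    finally show ?thesis by (rule mult_left_mono) (use w2 in auto)
  qed
  also have "\<dots> = w ^ K" by simp
  finally show ?thesis by (simp add: w_def)
qed

lemma good_bound:
  fixes z :: complex and K :: nat and d :: real
  assumes zK: "cmod z \<le> real K / 32" and d: "exp (- real K) \<le> d"
  shows "cmod (\<Sum>i=0..K. z^i / of_nat (fact i)) \<le> cmod (exp z) * (1 + d/3)"
    and "cmod (\<Sum>i=0..K. z^i / of_nat (fact i)) \<ge> cmod (exp z) * (1 - d/3)"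
proof -
  let ?E = "\<Sum>i=0..K. z^i / of_nat (fact i)"
  have t: "cmod (exp z - ?E) \<le> exp (- real K) * exp (- real K / 32) / 3" by (rule tail_bound[OF zK])
  have "exp (- real K / 32) \<le> exp (- cmod z)" using zK by simp
  also have "\<dots> \<le> exp (Re z)" using abs_Re_le_cmod[of z] by simp
  finally have e: "exp (- real K / 32) \<le> cmod (exp z)" by simp
  have d0: "0 \<le> d" using d by (meson exp_ge_zero order_trans)
  have "exp (- real K) * exp (- real K / 32) / 3 \<le> d * cmod (exp z) / 3"
    by (intro divide_right_mono mult_mono d e) (use d0 in auto)
  with t have tt: "cmod (exp z - ?E) \<le> cmod (exp z) * (d/3)" by (simp add: mult.commute)
  have "cmod ?E \<le> cmod (exp z) + cmod (exp z - ?E)" using norm_triangle_ineq4[of "exp z" "exp z - ?E"] by simp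
  then show "cmod ?E \<le> cmod (exp z) * (1 + d/3)" using tt by (simp add: algebra_simps)
  have "cmod (exp z) \<le> cmod ?E + cmod (exp z - ?E)" using norm_triangle_ineq[of ?E "exp z - ?E"] by simp
  then show "cmod ?E \<ge> cmod (exp z) * (1 - d/3)" using tt by (simp add: algebra_simps)
qed

lemma alg_i:
  fixes k A B R d Qt :: real
  assumes k: "k > 0" and A0: "0 \<le> A" and B0: "0 \<le> B" and d0: "0 < d" and d1: "d < 1"
    and Au: "A \<le> exp (k*R) * (1 + d/3)" and Al: "exp (k*R) * (1 - d/3) \<le> A"
    and Bu: "B \<le> exp ((k-1)*R) * (1 + d/3)" and Q: "0 \<le> Qt"
  shows "A powr (2/k) * B^2 \<le> A^2 * (1+d) powr (2/k+2) * (1-d) powr (-2) + Qt"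
proof -
  define e where "e = d/3"
  have e0: "0 < e" "e < 1" "e \<le> d" using d0 d1 by (auto simp: e_def)
  have "A powr (2/k) \<le> (exp (k*R) * (1+e)) powr (2/k)"
    by (rule powr_mono2) (use k A0 Au in \<open>auto simp: e_def\<close>)
  also have "\<dots> = exp (2*R) * (1+e) powr (2/k)"
    using k e0 by (simp add: powr_mult exp_powr_real)
  finally have a1: "A powr (2/k) \<le> exp (2*R) * (1+e) powr (2/k)" .
  have b1: "B^2 \<le> (exp ((k-1)*R) * (1+e))^2"
    by (rule power_mono) (use B0 Bu in \<open>auto simp: e_def\<close>)
  have "A powr (2/k) * B^2 \<le> (exp (2*R) * (1+e) powr (2/k)) * (exp ((k-1)*R) * (1+e))^2"
    by (rule mult_mono[OF a1 b1]) auto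
  also have "\<dots> = (exp (k*R))^2 * ((1+e) powr (2/k) * (1+e)^2)"
  proof -
    have "exp (2*R) * (exp ((k-1)*R))^2 = exp (2*R + (k-1)*R + (k-1)*R)"
      by (simp only: exp_add power2_eq_square mult.assoc)
    also have "\<dots> = exp (k*R + k*R)" by (rule arg_cong[where f=exp]) (simp add: algebra_simps)
    also have "\<dots> = (exp (k*R))^2" by (simp only: exp_add power2_eq_square)
    finally have h: "exp (2*R) * (exp ((k-1)*R))^2 = (exp (k*R))^2" .
    show ?thesis unfolding h[symmetric] by (simp add: power_mult_distrib)
  qed
  also have "\<dots> \<le> (A / (1-e))^2 * ((1+d) powr (2/k) * (1+d)^2)"
  proof (rule mult_mono)
    have "exp (k*R) \<le> A / (1-e)" using Al e0 by (simp add: e_def field_simps)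
    then show "(exp (k*R))^2 \<le> (A / (1-e))^2" by (rule power_mono) simp
    show "(1+e) powr (2/k) * (1+e)^2 \<le> (1+d) powr (2/k) * (1+d)^2"
      by (intro mult_mono powr_mono2 power_mono) (use e0 k in auto)
  qed auto
  also have "\<dots> \<le> (A / (1-d))^2 * ((1+d) powr (2/k) * (1+d)^2)"
  proof (rule mult_right_mono)
    have "A / (1-e) \<le> A / (1-d)" by (rule divide_left_mono) (use A0 e0 d1 in auto)
    then show "(A / (1-e))^2 \<le> (A / (1-d))^2" by (rule power_mono) (use A0 e0 in auto)
  qed auto
  also have "\<dots> = A^2 * (1+d) powr (2/k+2) * (1-d) powr (-2)"
    using d0 d1 by (simp add: powr_add powr_minus power_divide powr_realpow divide_inverse power_mult_distrib power_inverse)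
  finally show ?thesis using Q by linarith
qed

lemma alg_ii:
  fixes k A B R d Qt :: real
  assumes k: "k > 1/2" and A0: "0 \<le> A" and B0: "0 \<le> B" and d0: "0 < d" and d1: "d < 1"
    and Au: "A \<le> exp (k*R) * (1 + d/3)" and Al: "exp (k*R) * (1 - d/3) \<le> A"
    and Bu: "B \<le> exp ((k-1)*R) * (1 + d/3)" and Q: "0 \<le> Qt"
  shows "(B * A) powr (2*k/(2*k-1)) \<le> A^2 * (1+d) powr (2*k/(2*k-1)) * (1-d) powr (-2) + Qt"
proof -
  define e where "e = d/3"
  define p where "p = 2*k/(2*k-1)"
  have p0: "p > 0" using k by (simp add: p_def)
  have e0: "0 < e" "e < 1" "e \<le> d" using d0 d1 by (auto simp: e_def)
  have ee: "(1+e)^2 \<le> 1 + d" using d0 d1 by (simp add: e_def power2_eq_square field_simps)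
  have "B * A \<le> (exp ((k-1)*R) * (1+e)) * (exp (k*R) * (1+e))"
    by (rule mult_mono) (use A0 B0 Au Bu e0 in \<open>auto simp: e_def\<close>)
  also have "\<dots> = exp ((2*k-1)*R) * (1+e)^2"
    by (simp add: exp_add[symmetric] power2_eq_square algebra_simps)
  finally have ba: "B * A \<le> exp ((2*k-1)*R) * (1+e)^2" .
  have "(B * A) powr p \<le> (exp ((2*k-1)*R) * (1+e)^2) powr p"
    by (rule powr_mono2) (use ba A0 B0 p0 in auto)
  also have "\<dots> = exp (2*k*R) * ((1+e)^2) powr p"
    using k e0 by (simp add: powr_mult exp_powr_real p_def)
  also have "\<dots> \<le> (A / (1-e))^2 * (1+d) powr p"
  proof (rule mult_mono)
    have "exp (k*R) \<le> A / (1-e)" using Al e0 by (simp add: e_def field_simps)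
    then have "(exp (k*R))^2 \<le> (A / (1-e))^2" by (rule power_mono) simp
    then show "exp (2*k*R) \<le> (A / (1-e))^2" by (simp add: power2_eq_square exp_add[symmetric] algebra_simps)
    show "((1+e)^2) powr p \<le> (1+d) powr p" by (rule powr_mono2) (use ee p0 in auto)
  qed auto
  also have "\<dots> \<le> (A / (1-d))^2 * (1+d) powr p"
  proof (rule mult_right_mono)
    have "A / (1-e) \<le> A / (1-d)" by (rule divide_left_mono) (use A0 e0 d1 in auto)
    then show "(A / (1-e))^2 \<le> (A / (1-d))^2" by (rule power_mono) (use A0 e0 in auto)
  qed auto
  also have "\<dots> = A^2 * (1+d) powr p * (1-d) powr (-2)"
    using d0 d1 by (simp add: powr_minus power_divide powr_realpow divide_inverse power_mult_distrib power_inverse)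
  finally show ?thesis using Q by (simp add: p_def)
qed

lemma norm_E_le:
  fixes z :: complex
  assumes "cmod z \<le> u"
  shows "cmod (\<Sum>i=0..K. z^i / of_nat (fact i)) \<le> (\<Sum>i=0..K. u^i / fact i)"
proof -
  have "cmod (\<Sum>i=0..K. z^i / of_nat (fact i)) \<le> (\<Sum>i=0..K. cmod (z^i / of_nat (fact i)))"
    by (rule norm_sum)
  also have "\<dots> \<le> (\<Sum>i=0..K. u^i / fact i)"
  proof (rule sum_mono)
    fix i
    have "cmod (z^i / of_nat (fact i)) = cmod z ^ i / fact i"
      by (simp add: norm_divide norm_power)
    also have "\<dots> \<le> u ^ i / fact i"
      by (intro divide_right_mono power_mono assms) auto
    finally show "cmod (z^i / of_nat (fact i)) \<le> u^i / fact i" .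
  qed
  finally show ?thesis .
qed

theorem lemma3p2:
  fixes k :: real
  assumes "k > 0"
  shows "\<exists>M0. \<forall>M\<ge>M0. \<exists>T0. \<forall>T\<ge>T0. \<forall>j\<in>{1..Jcal T M}. \<forall>s::complex.
    (k \<le> 1/2 \<longrightarrow>
      cmod (Nj k T j s k) powr (2 / k) * cmod (Nj k T j s (k - 1)) ^ 2
        \<le> cmod (Nj k T j s k) ^ 2 * (1 + deltaj k T j) powr (2 / k + 2) * (1 - deltaj k T j) powr (-2)
          + cmod (Qj k T j s) ^ (2 * rk k)) \<and>
    (k > 1/2 \<longrightarrow>
      cmod (Nj k T j s (k - 1) * Nj k T j s k) powr (2 * k / (2 * k - 1))
        \<le> cmod (Nj k T j s k) ^ 2 * (1 + deltaj k T j) powr (2 * k / (2 * k - 1)) * (1 - deltaj k T j) powr (-2)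
          + cmod (Qj k T j s) ^ (2 * rk k))"
proof -
  have k0: "k > 0" by fact
  define T0 where "T0 = exp (exp 1) + (1::real)"
  have main: "(k \<le> 1/2 \<longrightarrow>
      cmod (Nj k T j s k) powr (2 / k) * cmod (Nj k T j s (k - 1)) ^ 2
        \<le> cmod (Nj k T j s k) ^ 2 * (1 + deltaj k T j) powr (2 / k + 2) * (1 - deltaj k T j) powr (-2)
          + cmod (Qj k T j s) ^ (2 * rk k)) \<and>
    (k > 1/2 \<longrightarrow>
      cmod (Nj k T j s (k - 1) * Nj k T j s k) powr (2 * k / (2 * k - 1))
        \<le> cmod (Nj k T j s k) ^ 2 * (1 + deltaj k T j) powr (2 * k / (2 * k - 1)) * (1 - deltaj k T j) powr (-2)
          + cmod (Qj k T j s) ^ (2 * rk k))"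
    if T: "T \<ge> T0" and j: "j \<ge> 1" for T j s
  proof -
    have Tpos: "T > 0" using T unfolding T0_def by (smt (verit) exp_gt_zero)
    have "exp (exp 1) < T" using T unfolding T0_def by simp
    then have "exp 1 < ln T" using Tpos by (metis exp_less_cancel_iff exp_ln)
    moreover have "(1::real) < exp 1" by simp
    ultimately have lnT: "1 < ln T" by linarith
    have lnln: "0 < ln (ln T)" using lnT by simp
    define \<alpha> where "\<alpha> = alpha T j"
    have a0: "\<alpha> > 0" using j lnln by (simp add: \<alpha>_def alpha_def)
    define l where "l = exp 2 * k * \<alpha> powr (- 3/4)"
    have l0: "l > 0" using a0 k0 by (simp add: l_def)
    define K where "K = Kj k T j"
    have KK: "K = nat \<lceil>l\<rceil>" by (simp add: K_def Kj_def l_def \<alpha>_def)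
    have lK: "l \<le> real K" using KK by linarith
    have K1: "K \<ge> 1" using KK l0 by linarith
    define \<delta> where "\<delta> = deltaj k T j"
    have dl: "\<delta> = exp (- l)" by (simp add: \<delta>_def deltaj_def l_def \<alpha>_def)
    have d0: "\<delta> > 0" using dl by simp
    have d1: "\<delta> < 1" using dl l0 by simp
    have dK: "exp (- real K) \<le> \<delta>" using dl lK by simp
    define P where "P = Pj T j s"
    define c where "c = max 2 (k + 3/2)"
    have c2: "c \<ge> 2" by (simp add: c_def)
    have N: "Nj k T j s a = (\<Sum>i=0..K. (of_real a * P)^i / of_nat (fact i))" for a
      by (simp add: Nj_def Etr_def KK l_def \<alpha>_def P_def)
    define W where "W = (64 * c * cmod P / real K) ^ K"
    have QW: "cmod (Qj k T j s) = W"
      using c2 by (simp add: Qj_def W_def K_def[symmetric] P_def[symmetric] c_def[symmetric]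
          norm_power norm_divide norm_mult)
    have ak: "\<bar>k\<bar> \<le> c" "\<bar>k - 1\<bar> \<le> c" using k0 by (auto simp: c_def)
    have W0: "0 \<le> W" using c2 by (simp add: W_def)
    have Qt0: "0 \<le> W ^ (2 * rk k)" using W0 by simp
    show ?thesis
    proof (cases "c * cmod P \<le> real K / 32")
      case True
      have zb: "cmod (of_real a * P) \<le> real K / 32" if "\<bar>a\<bar> \<le> c" for a
      proof -
        have "cmod (of_real a * P) = \<bar>a\<bar> * cmod P" by (simp add: norm_mult)
        also have "\<dots> \<le> c * cmod P" by (rule mult_right_mono[OF that]) simp
        finally show ?thesis using True by linarith
      qed
      have ex: "cmod (exp (of_real a * P)) = exp (a * Re P)" for a by simp
      have Au: "cmod (Nj k T j s k) \<le> exp (k * Re P) * (1 + \<delta>/3)"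
        using good_bound(1)[OF zb[OF ak(1)] dK] unfolding N ex .
      have Al: "exp (k * Re P) * (1 - \<delta>/3) \<le> cmod (Nj k T j s k)"
        using good_bound(2)[OF zb[OF ak(1)] dK] unfolding N ex .
      have Bu: "cmod (Nj k T j s (k-1)) \<le> exp ((k-1) * Re P) * (1 + \<delta>/3)"
        using good_bound(1)[OF zb[OF ak(2)] dK] unfolding N ex .
      show ?thesis
      proof (intro conjI impI)
        show "cmod (Nj k T j s k) powr (2 / k) * cmod (Nj k T j s (k - 1)) ^ 2
          \<le> cmod (Nj k T j s k) ^ 2 * (1 + deltaj k T j) powr (2 / k + 2) * (1 - deltaj k T j) powr (-2)
          + cmod (Qj k T j s) ^ (2 * rk k)"
          unfolding QW \<delta>_def[symmetric]
          by (rule alg_i[OF k0 _ _ d0 d1 Au Al Bu Qt0]) auto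
        assume "k > 1/2"
        show "cmod (Nj k T j s (k - 1) * Nj k T j s k) powr (2 * k / (2 * k - 1))
          \<le> cmod (Nj k T j s k) ^ 2 * (1 + deltaj k T j) powr (2 * k / (2 * k - 1)) * (1 - deltaj k T j) powr (-2)
          + cmod (Qj k T j s) ^ (2 * rk k)"
          unfolding QW \<delta>_def[symmetric] norm_mult
          by (rule alg_ii[OF \<open>k > 1/2\<close> _ _ d0 d1 Au Al Bu Qt0]) auto
      qed
    next
      case False
      then have big: "real K / 32 < c * cmod P" by simp
      have Nb: "cmod (Nj k T j s a) \<le> W" if "\<bar>a\<bar> \<le> c" for a
      proof -
        have "cmod (of_real a * P) \<le> c * cmod P"
          by (simp add: norm_mult mult_right_mono[OF that])
        then have "cmod (Nj k T j s a) \<le> (\<Sum>i=0..K. (c * cmod P)^i / fact i)"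
          unfolding N by (rule norm_E_le)
        also have "\<dots> \<le> (64 * (c * cmod P) / real K) ^ K" by (rule bad_bound[OF K1 big])
        finally show ?thesis by (simp add: W_def mult.assoc)
      qed
      have W1: "W \<ge> 1"
      proof -
        have "64 * c * cmod P / real K > 2" using big K1 by (simp add: field_simps)
        then show ?thesis unfolding W_def by (intro one_le_power) simp
      qed
      have A0: "0 \<le> cmod (Nj k T j s k)" by simp
      have RHS: "W ^ (2 * rk k) \<le> cmod (Nj k T j s k) ^ 2 * (1 + \<delta>) powr e * (1 - \<delta>) powr (-2) + W ^ (2 * rk k)" for e
        by simp
      show ?thesis
      proof (intro conjI impI)
        assume kh: "k \<le> 1/2"
        have rk: "real (2 * rk k) \<ge> 2 / k + 2"
        proof -
          have "rk k = 2 + nat \<lceil>1/k\<rceil>" using kh by (simp add: rk_def)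
          moreover have "real (nat \<lceil>1/k\<rceil>) \<ge> 1/k" by linarith
          ultimately show ?thesis by simp
        qed
        have "cmod (Nj k T j s k) powr (2 / k) * cmod (Nj k T j s (k - 1)) ^ 2 \<le> W powr (2/k) * W ^ 2"
          by (intro mult_mono powr_mono2 power_mono Nb ak) (use k0 W0 in auto)
        also have "\<dots> = W powr (2/k + 2)" using W1 by (simp add: powr_add powr_realpow)
        also have "\<dots> \<le> W powr real (2 * rk k)" by (rule powr_mono[OF rk W1])
        also have "\<dots> = W ^ (2 * rk k)" using W1 by (subst powr_realpow) auto
        finally show "cmod (Nj k T j s k) powr (2 / k) * cmod (Nj k T j s (k - 1)) ^ 2
          \<le> cmod (Nj k T j s k) ^ 2 * (1 + deltaj k T j) powr (2 / k + 2) * (1 - deltaj k T j) powr (-2)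
          + cmod (Qj k T j s) ^ (2 * rk k)"
          unfolding QW \<delta>_def[symmetric] using RHS by (rule order_trans)
      next
        assume kh: "k > 1/2"
        define p where "p = 2 * k / (2 * k - 1)"
        have p0: "p > 0" using kh by (simp add: p_def)
        have rk: "real (2 * rk k) \<ge> 2 * p"
        proof -
          have "rk k = 1 + nat \<lceil>p\<rceil>" using kh by (simp add: rk_def p_def)
          moreover have "real (nat \<lceil>p\<rceil>) \<ge> p" by linarith
          ultimately show ?thesis by simp
        qed
        have "cmod (Nj k T j s (k - 1) * Nj k T j s k) powr p \<le> (W * W) powr p"
          unfolding norm_mult
          by (intro powr_mono2 mult_mono Nb ak) (use p0 W0 in auto)
        also have "\<dots> = W powr (2 * p)" using W1 by (simp add: powr_mult[symmetric] powr_powr[symmetric] powr_realpow power2_eq_square)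
        also have "\<dots> \<le> W powr real (2 * rk k)" by (rule powr_mono[OF rk W1])
        also have "\<dots> = W ^ (2 * rk k)" using W1 by (subst powr_realpow) auto
        finally show "cmod (Nj k T j s (k - 1) * Nj k T j s k) powr (2 * k / (2 * k - 1))
          \<le> cmod (Nj k T j s k) ^ 2 * (1 + deltaj k T j) powr (2 * k / (2 * k - 1)) * (1 - deltaj k T j) powr (-2)
          + cmod (Qj k T j s) ^ (2 * rk k)"
          unfolding QW \<delta>_def[symmetric] p_def[symmetric] using RHS by (rule order_trans)
      qed
    qed
  qed
  show ?thesis
    by (rule exI[of _ 0], intro allI impI, rule exI[of _ T0]) (use main in auto)
qed

end
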